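(* Let $a,b\in\mathbb{Q}^*$ be multiplicatively independent. Then the set of primes $p$ with $\operatorname{ord}_p(a)=\operatorname{ord}_p(b)=0$ such that $(b \bmod p)$ lies in the subgroup $\langle a \bmod p\rangle$ of $\mathbb{F}_p^*$ is infinite.
   Context: Elements $a,b\in\mathbb{Q}^*$ are multiplicatively independent if there are no integers $x,y$, not both zero, with $a^xb^y=1$. For a prime $p$ and $x\in\mathbb{Q}^*$, $\operatorname{ord}_p(x)$ denotes the exponent of $p$ in $x$; when $\operatorname{ord}_p(x)=0$, $x \bmod p$ denotes the reduction of $x$ in $\mathbb{F}_p^*$. *)

theory Defs
  imports Complex_Main "HOL-Computational_Algebra.Primes" "HOL-Number_Theory.Cong"
begin

definition rat_num :: "rat \<Rightarrow> int" where "rat_num x = fst (quotient_of x)"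
definition rat_den :: "rat \<Rightarrow> int" where "rat_den x = snd (quotient_of x)"

definition ord_p :: "nat \<Rightarrow> rat \<Rightarrow> int" where
  "ord_p p x = int (multiplicity (int p) (rat_num x)) - int (multiplicity (int p) (rat_den x))"

text \<open>Equality of reductions modulo p of two rationals x, y with ord_p = 0:
  (x mod p) = (y mod p) in F_p, i.e. num x * den y = num y * den x mod p.\<close>
definition rat_mod_eq :: "nat \<Rightarrow> rat \<Rightarrow> rat \<Rightarrow> bool" where
  "rat_mod_eq p x y \<longleftrightarrow> [rat_num x * rat_den y = rat_num y * rat_den x] (mod int p)"

definition mult_independent :: "rat \<Rightarrow> rat \<Rightarrow> bool" where
  "mult_independent a b \<longleftrightarrow>
     \<not> (\<exists>x y :: int. (x \<noteq> 0 \<or> y \<noteq> 0) \<and> a powi x * b powi y = 1)"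

end

theory Submission imports Defs "HOL-Number_Theory.Number_Theory" begin

lemma coprime_primeI:
  fixes a b :: int
  assumes "\<And>p. prime p \<Longrightarrow> p dvd a \<Longrightarrow> p dvd b \<Longrightarrow> False"
  shows "coprime a b"
proof (rule ccontr)
  assume nc: "\<not> coprime a b"
  show False
  proof (cases "gcd a b = 0")
    case True
    then have "a = 0" "b = 0" by auto
    then show False using assms[of 2] by auto
  next
    case False
    have "\<not> is_unit (gcd a b)" using nc by (simp add: coprime_iff_gcd_eq_1)
    then obtain p where "p dvd gcd a b" "prime p" using prime_divisor_exists[OF False] by blast
    then show False using assms[of p] by auto
  qed
qed

lemma euler_int:
  fixes x m :: int
  assumes "coprime x m" "m \<noteq> 0"
  shows "[x ^ totient (nat \<bar>m\<bar>) = 1] (mod m)"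
proof (cases "\<bar>m\<bar> = 1")
  case True
  then have "m = 1 \<or> m = -1" by linarith
  then show ?thesis by (elim disjE) (simp_all add: cong_iff_dvd_diff)
next
  case False
  then have "\<bar>m\<bar> > 1" using assms(2) by linarith
  then interpret residues "\<bar>m\<bar>" "residue_ring \<bar>m\<bar>" by unfold_locales
  have "coprime x \<bar>m\<bar>" using assms(1) by simp
  then have "[x ^ totient (nat \<bar>m\<bar>) = 1] (mod \<bar>m\<bar>)" by (rule euler_theorem)
  then show ?thesis by simp
qed

lemma stab:
  fixes C A :: int
  assumes "C \<noteq> 0" "nat \<bar>C\<bar> \<le> t"
  shows "coprime (C div gcd C (A ^ t)) A"
proof (rule coprime_primeI)
  fix q :: int assume q: "prime q" "q dvd C div gcd C (A ^ t)" "q dvd A"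
  define e where "e = multiplicity q C"
  have qe: "q ^ e dvd C" unfolding e_def by (rule multiplicity_dvd)
  have "\<bar>q ^ e\<bar> \<le> \<bar>C\<bar>" using qe assms(1) by (metis dvd_imp_le_int)
  then have "q ^ e \<le> \<bar>C\<bar>" using prime_gt_0_int[OF q(1)] by simp
  moreover have "int e < 2 ^ e" using less_exp[of e] by (metis of_nat_less_iff of_nat_numeral of_nat_power)
  moreover have "(2::int) ^ e \<le> q ^ e" using prime_ge_2_int[OF q(1)] by (intro power_mono) auto
  ultimately have "int e < \<bar>C\<bar>" by linarith
  then have et: "e \<le> t" using assms(2) by linarith
  have "q ^ e dvd q ^ t" using et by (rule le_imp_power_dvd)
  also have "q ^ t dvd A ^ t" using q(3) by (rule dvd_power_same)
  finally have "q ^ e dvd gcd C (A ^ t)" using qe by simp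
  moreover have "C = gcd C (A ^ t) * (C div gcd C (A ^ t))" by simp
  ultimately have "q ^ e * q dvd C" using q(2) by (metis mult_dvd_mono)
  then have "q ^ Suc e dvd C" by (simp add: mult.commute)
  then have "Suc e \<le> multiplicity q C"
    using multiplicity_geI[OF assms(1) _ \<open>q ^ Suc e dvd C\<close>] not_prime_unit q(1) by blast
  then show False unfolding e_def by simp
qed

lemma growth:
  fixes A B X Y :: int and y :: int
  assumes AB: "\<bar>A\<bar> > \<bar>B\<bar>" and B0: "B \<noteq> 0" and Y0: "Y \<noteq> 0" and L: "L > 0"
  shows "\<exists>m. y < \<bar>X * B ^ (c + m * L) - A ^ (c + m * L) * Y\<bar>"
proof -
  define a where "a = real_of_int \<bar>A\<bar>"
  define b where "b = real_of_int \<bar>B\<bar>"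
  define x where "x = real_of_int \<bar>X\<bar>"
  define r where "r = a / b"
  have b1: "b \<ge> 1" using B0 unfolding b_def by linarith
  have ab: "a > b" using AB unfolding a_def b_def by simp
  have r1: "r > 1" using ab b1 unfolding r_def by simp
  have rL: "r ^ L > 1" using r1 L by (simp add: one_less_power)
  obtain m where m: "x + \<bar>real_of_int y\<bar> < (r ^ L) ^ m" using real_arch_pow[OF rL] by blast
  define k where "k = c + m * L"
  have "r ^ k = r ^ c * (r ^ L) ^ m" unfolding k_def by (simp add: power_add power_mult mult.commute)
  moreover have "r ^ c \<ge> 1" using r1 by (simp add: one_le_power)
  moreover have "(r ^ L) ^ m > 0" using r1 by simp
  ultimately have rk: "r ^ k \<ge> (r ^ L) ^ m" by (metis mult_le_cancel_right1 less_le_not_le)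
  have aeq: "a ^ k = r ^ k * b ^ k" unfolding r_def using b1 by (simp add: power_divide)
  have bk: "b ^ k \<ge> 1" using b1 by (simp add: one_le_power)
  have pos: "r ^ k - x > 0" using rk m by linarith
  have "b ^ k * (r ^ k - x) \<ge> 1 * (r ^ k - x)" using bk pos by (intro mult_right_mono) auto
  then have main: "a ^ k - x * b ^ k > real_of_int y" using aeq pos rk m by (simp add: algebra_simps)
  have yy: "\<bar>Y\<bar> \<ge> 1" using Y0 by linarith
  have e1: "real_of_int \<bar>X * B ^ k - A ^ k * Y\<bar> \<ge> real_of_int (\<bar>A ^ k * Y\<bar> - \<bar>X * B ^ k\<bar>)"
    by simp
  have e2: "real_of_int (\<bar>A ^ k * Y\<bar> - \<bar>X * B ^ k\<bar>) = a ^ k * real_of_int \<bar>Y\<bar> - x * b ^ k"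
    unfolding a_def b_def x_def by (simp add: abs_mult power_abs)
  have e3: "a ^ k * real_of_int \<bar>Y\<bar> \<ge> a ^ k * 1"
    using yy by (intro mult_left_mono) (auto simp: a_def)
  have "real_of_int \<bar>X * B ^ k - A ^ k * Y\<bar> \<ge> a ^ k - x * b ^ k" using e1 e2 e3 by linarith
  then have "real_of_int y < real_of_int \<bar>X * B ^ k - A ^ k * Y\<bar>" using main by linarith
  then show ?thesis unfolding k_def of_int_less_iff by blast
qed

lemma core:
  fixes A B X Y :: int and F :: "nat set"
  assumes AB: "\<bar>A\<bar> > \<bar>B\<bar>" and B0: "B \<noteq> 0" and cAB: "coprime A B"
    and cXA: "coprime X A" and cYB: "coprime Y B" and Y0: "Y \<noteq> 0" and fin: "finite F"
  shows "\<exists>k p. k \<ge> 1 \<and> prime p \<and> p \<notin> F \<and> \<not> int p dvd A \<and> \<not> int p dvd B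
            \<and> int p dvd (X * B ^ k - A ^ k * Y)"
proof -
  define M where "M k = X * B ^ k - A ^ k * Y" for k
  have Mcop: "coprime (M k) A \<and> coprime (M k) B" if k1: "k \<ge> 1" for k
  proof
    show "coprime (M k) A"
    proof (rule coprime_primeI)
      fix q :: int assume q: "prime q" "q dvd M k" "q dvd A"
      have "q dvd A ^ k" using q(3) k1 by (meson dvd_trans dvd_power less_le_trans zero_less_one)
      then have "q dvd A ^ k * Y" by simp
      then have "q dvd M k + A ^ k * Y" using q(2) by simp
      then have "q dvd X * B ^ k" unfolding M_def by simp
      then have "q dvd X \<or> q dvd B" using q(1) prime_dvd_mult_iff prime_dvd_power by metis
      then show False
        using q cXA cAB coprime_common_divisor not_prime_unit by metis
    qed
    show "coprime (M k) B"
    proof (rule coprime_primeI)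
      fix q :: int assume q: "prime q" "q dvd M k" "q dvd B"
      have "q dvd B ^ k" using q(3) k1 by (meson dvd_trans dvd_power less_le_trans zero_less_one)
      then have "q dvd X * B ^ k" by simp
      then have "q dvd X * B ^ k - M k" using q(2) by simp
      then have "q dvd A ^ k * Y" unfolding M_def by simp
      then have "q dvd A \<or> q dvd Y" using q(1) prime_dvd_mult_iff prime_dvd_power by metis
      then show False
        using q cYB cAB coprime_common_divisor not_prime_unit by metis
    qed
  qed
  obtain m0 where m0: "0 < \<bar>M (1 + m0 * 1)\<bar>"
    using growth[OF AB B0 Y0, of 1 0 X 1] unfolding M_def by auto
  define c where "c = 1 + m0"
  have c1: "c \<ge> 1" unfolding c_def by simp
  have Mc0: "M c \<noteq> 0" using m0 unfolding c_def by auto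
  define Q where "Q = {q \<in> F. prime q \<and> coprime (int q) (A * B)}"
  define P where "P = (\<Prod>q\<in>Q. int q)"
  have finQ: "finite Q" using fin unfolding Q_def by simp
  have Ppos: "P > 0" unfolding P_def Q_def
    by (rule prod_pos) (auto dest: prime_gt_0_nat)
  have cPA: "coprime P A" and cPB: "coprime P B" unfolding P_def
    by (auto intro!: prod_coprime_left simp: Q_def)
  define R where "R = M c * P"
  have R0: "R \<noteq> 0" using Mc0 Ppos unfolding R_def by simp
  have cAR: "coprime A R" using Mcop[OF c1] cPA unfolding R_def
    by (simp add: coprime_commute)
  have cBR: "coprime B R" using Mcop[OF c1] cPB unfolding R_def
    by (simp add: coprime_commute)
  define L where "L = totient (nat \<bar>R\<bar>)"
  have L0: "L > 0" using R0 unfolding L_def by simp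
  have hA: "[A ^ L = 1] (mod R)" unfolding L_def by (rule euler_int[OF cAR R0])
  have hB: "[B ^ L = 1] (mod R)" unfolding L_def by (rule euler_int[OF cBR R0])
  obtain m where big: "\<bar>M c\<bar> < \<bar>M (c + m * L)\<bar>"
    using growth[OF AB B0 Y0 L0, of "\<bar>M c\<bar>" X c] unfolding M_def by auto
  define k where "k = c + m * L"
  have k1: "k \<ge> 1" using c1 unfolding k_def by simp
  have "[(A ^ L) ^ m = 1 ^ m] (mod R)" using hA by (rule cong_pow)
  then have dA: "R dvd A ^ (m * L) - 1" by (simp add: cong_iff_dvd_diff power_mult mult.commute)
  have "[(B ^ L) ^ m = 1 ^ m] (mod R)" using hB by (rule cong_pow)
  then have dB: "R dvd B ^ (m * L) - 1" by (simp add: cong_iff_dvd_diff power_mult mult.commute)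
  have diff: "M k - M c = X * B ^ c * (B ^ (m * L) - 1) - A ^ c * Y * (A ^ (m * L) - 1)"
    unfolding M_def k_def by (simp add: power_add algebra_simps)
  have "R dvd M k - M c" unfolding diff using dA dB by (meson dvd_diff dvd_mult)
  then obtain s where s: "M k - M c = R * s" by (elim dvdE)
  define z where "z = 1 + P * s"
  have Mkz: "M k = M c * z" using s unfolding z_def R_def by (simp add: algebra_simps)
  have z0: "z \<noteq> 0" using Mkz big unfolding k_def by auto
  have zu: "\<not> is_unit z"
  proof
    assume "is_unit z"
    then have "\<bar>z\<bar> = 1" by (simp add: zdvd1_eq)
    then have "\<bar>M k\<bar> = \<bar>M c\<bar>" using Mkz by (simp add: abs_mult)
    then show False using big unfolding k_def by simp
  qed
  obtain q where q: "q dvd z" "prime q" using prime_divisor_exists[OF z0 zu] by blast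
  have q0: "q > 0" using q(2) by (rule prime_gt_0_int)
  define p where "p = nat q"
  have pq: "int p = q" using q0 unfolding p_def by simp
  have pp: "prime p" using q(2) pq prime_nat_int_transfer by metis
  have qM: "q dvd M k" using q(1) Mkz by simp
  have nA: "\<not> q dvd A"
    using Mcop[OF k1] qM q(2) coprime_common_divisor not_prime_unit by metis
  have nB: "\<not> q dvd B"
    using Mcop[OF k1] qM q(2) coprime_common_divisor not_prime_unit by metis
  have pF: "p \<notin> F"
  proof
    assume pF: "p \<in> F"
    have "\<not> q dvd A * B" using nA nB q(2) by (simp add: prime_dvd_mult_iff)
    then have "coprime q (A * B)" using q(2) by (metis prime_imp_coprime)
    then have "p \<in> Q" using pF pp pq unfolding Q_def by simp
    then have "int p dvd P" unfolding P_def using finQ by (intro dvd_prodI)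
    then have "q dvd P * s" using pq by simp
    then have "q dvd z - P * s" using q(1) by (intro dvd_diff)
    then have "q dvd 1" unfolding z_def by simp
    then show False using q(2) not_prime_unit by blast
  qed
  show ?thesis using k1 pp pF nA nB qM pq unfolding M_def by metis
qed


lemma core2:
  fixes A B X Y :: int and F :: "nat set"
  assumes AB: "\<bar>A\<bar> \<noteq> \<bar>B\<bar>" and A0: "A \<noteq> 0" and B0: "B \<noteq> 0" and cAB: "coprime A B"
    and cXA: "coprime X A" and cYB: "coprime Y B" and X0: "X \<noteq> 0" and Y0: "Y \<noteq> 0"
    and fin: "finite F"
  shows "\<exists>k p. k \<ge> 1 \<and> prime p \<and> p \<notin> F \<and> \<not> int p dvd A \<and> \<not> int p dvd B
            \<and> int p dvd (X * B ^ k - A ^ k * Y)"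
proof (cases "\<bar>A\<bar> > \<bar>B\<bar>")
  case True
  then show ?thesis using core[OF True B0 cAB cXA cYB Y0 fin] by blast
next
  case False
  then have BA: "\<bar>B\<bar> > \<bar>A\<bar>" using AB by linarith
  have cBA: "coprime B A" using cAB by (simp add: coprime_commute)
  obtain k p where kp: "k \<ge> 1" "prime p" "p \<notin> F" "\<not> int p dvd B" "\<not> int p dvd A"
      "int p dvd (Y * A ^ k - B ^ k * X)"
    using core[OF BA A0 cBA cYB cXA X0 fin] by blast
  have "Y * A ^ k - B ^ k * X = - (X * B ^ k - A ^ k * Y)" by (simp add: algebra_simps)
  then have "int p dvd (X * B ^ k - A ^ k * Y)" using kp(6) by (metis dvd_minus_iff)
  then show ?thesis using kp by blast
qed

lemma quot_pow:
  assumes "quotient_of a = (A, B)"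
  shows "quotient_of (a ^ n) = (A ^ n, B ^ n)"
proof -
  have B0: "B > 0" using assms quotient_of_denom_pos by blast
  have cAB: "coprime A B" using assms quotient_of_coprime by blast
  have a: "a = Fract A B" using Fract_quotient_of[of a] assms by simp
  have "a ^ n = Fract (A ^ n) (B ^ n)" unfolding a
    by (induction n) (simp_all add: One_rat_def)
  then show ?thesis using B0 cAB by (simp add: quotient_of_Fract)
qed

theorem theorem1:
  fixes a b :: rat
  assumes "a \<noteq> 0" and "b \<noteq> 0" and "mult_independent a b"
  shows "infinite {p :: nat. prime p \<and> ord_p p a = 0 \<and> ord_p p b = 0 \<and>
                    (\<exists>k :: nat. rat_mod_eq p b (a ^ k))}"
proof
  let ?S = "{p :: nat. prime p \<and> ord_p p a = 0 \<and> ord_p p b = 0 \<and>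
                    (\<exists>k :: nat. rat_mod_eq p b (a ^ k))}"
  assume finS: "finite ?S"
  obtain A B where qa: "quotient_of a = (A, B)" by (cases "quotient_of a") auto
  obtain C D where qb: "quotient_of b = (C, D)" by (cases "quotient_of b") auto
  have B0: "B > 0" using qa quotient_of_denom_pos by blast
  have cAB: "coprime A B" using qa quotient_of_coprime by blast
  have D0: "D > 0" using qb quotient_of_denom_pos by blast
  have cCD: "coprime C D" using qb quotient_of_coprime by blast
  have aq: "a = of_int A / of_int B" using qa by (rule quotient_of_div)
  have bq: "b = of_int C / of_int D" using qb by (rule quotient_of_div)
  have A0: "A \<noteq> 0" using aq assms(1) by auto
  have C0: "C \<noteq> 0" using bq assms(2) by auto
  have AB: "\<bar>A\<bar> \<noteq> \<bar>B\<bar>"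
  proof
    assume eq: "\<bar>A\<bar> = \<bar>B\<bar>"
    have "A dvd B" using eq by (metis abs_dvd_iff dvd_abs_iff dvd_refl)
    then have "is_unit A" using coprime_common_divisor[OF cAB dvd_refl] by simp
    then have "\<bar>A\<bar> = 1" by (simp add: zdvd1_eq)
    then have "B = 1" "A = 1 \<or> A = -1" using eq B0 by auto
    then have "a = 1 \<or> a = -1" using aq by auto
    then have "a ^ 2 = 1" by auto
    then have "a powi 2 * b powi 0 = 1" using power_int_of_nat[of a 2] by simp
    then have "\<exists>x y :: int. (x \<noteq> 0 \<or> y \<noteq> 0) \<and> a powi x * b powi y = 1"
      by (intro exI[of _ 2] exI[of _ 0]) simp
    then show False using assms(3) unfolding mult_independent_def by blast
  qed
  define t where "t = nat \<bar>C\<bar> + nat \<bar>D\<bar>"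
  define g1 where "g1 = gcd C (A ^ t)"
  define g2 where "g2 = gcd D (B ^ t)"
  define C1 where "C1 = C div g1"
  define A1 where "A1 = A ^ t div g1"
  define D1 where "D1 = D div g2"
  define B1 where "B1 = B ^ t div g2"
  have eC: "C = g1 * C1" unfolding C1_def g1_def by simp
  have eA: "A ^ t = g1 * A1" unfolding A1_def g1_def by simp
  have eD: "D = g2 * D1" unfolding D1_def g2_def by simp
  have eB: "B ^ t = g2 * B1" unfolding B1_def g2_def by simp
  have cC1: "coprime C1 A" unfolding C1_def g1_def by (rule stab) (use C0 t_def in auto)
  have cD1: "coprime D1 B" unfolding D1_def g2_def by (rule stab) (use D0 t_def in auto)
  have dB1: "B1 dvd B ^ t" using eB by simp
  have dA1: "A1 dvd A ^ t" using eA by simp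
  have cBtA: "coprime (B ^ t) A" using cAB by (simp add: coprime_commute)
  have cAtB: "coprime (A ^ t) B" using cAB by simp
  have cB1: "coprime B1 A" using coprime_divisors[OF dB1 dvd_refl cBtA] .
  have cA1: "coprime A1 B" using coprime_divisors[OF dA1 dvd_refl cAtB] .
  define X where "X = C1 * B1"
  define Y where "Y = A1 * D1"
  have cXA: "coprime X A" unfolding X_def using cC1 cB1 by simp
  have cYB: "coprime Y B" unfolding Y_def using cA1 cD1 by simp
  have X0: "X \<noteq> 0" unfolding X_def using eC eB C0 B0 by auto
  have Y0: "Y \<noteq> 0" unfolding Y_def using eA eD A0 D0 by auto
  obtain k p where kp: "k \<ge> 1" "prime p" "p \<notin> ?S" "\<not> int p dvd A" "\<not> int p dvd B"
      "int p dvd (X * B ^ k - A ^ k * Y)"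
    using core2[OF AB A0 _ cAB cXA cYB X0 Y0 finS] B0 by auto
  define n where "n = k + t"
  have iden: "g1 * g2 * (X * B ^ k - A ^ k * Y) = C * B ^ n - A ^ n * D"
    unfolding n_def X_def Y_def power_add eC eD eA eB by (simp add: algebra_simps)
  have pN: "int p dvd C * B ^ n - A ^ n * D"
    unfolding iden[symmetric] using kp(6) by (rule dvd_mult)
  have pp: "prime (int p)" using kp(2) by simp
  have nAn: "\<not> int p dvd A ^ n" using kp(4) pp prime_dvd_power by blast
  have nBn: "\<not> int p dvd B ^ n" using kp(5) pp prime_dvd_power by blast
  have nC: "\<not> int p dvd C"
  proof
    assume pC: "int p dvd C"
    then have "int p dvd C * B ^ n" by simp
    then have "int p dvd C * B ^ n - (C * B ^ n - A ^ n * D)" using pN by (rule dvd_diff)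
    moreover have "C * B ^ n - (C * B ^ n - A ^ n * D) = A ^ n * D" by simp
    ultimately have "int p dvd A ^ n * D" by simp
    then have "int p dvd D" using nAn pp prime_dvd_mult_iff by blast
    then show False using pC cCD pp coprime_common_divisor not_prime_unit by blast
  qed
  have nD: "\<not> int p dvd D"
  proof
    assume pD: "int p dvd D"
    then have "int p dvd A ^ n * D" by simp
    then have "int p dvd (C * B ^ n - A ^ n * D) + A ^ n * D" using pN by (intro dvd_add)
    moreover have "(C * B ^ n - A ^ n * D) + A ^ n * D = C * B ^ n" by simp
    ultimately have "int p dvd C * B ^ n" by simp
    then have "int p dvd C" using nBn pp prime_dvd_mult_iff by blast
    then show False using pD cCD pp coprime_common_divisor not_prime_unit by blast
  qed
  have oa: "ord_p p a = 0" unfolding ord_p_def rat_num_def rat_den_def qa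
    using kp(4) kp(5) by (simp add: not_dvd_imp_multiplicity_0)
  have ob: "ord_p p b = 0" unfolding ord_p_def rat_num_def rat_den_def qb
    using nC nD by (simp add: not_dvd_imp_multiplicity_0)
  have "rat_mod_eq p b (a ^ n)" unfolding rat_mod_eq_def rat_num_def rat_den_def qb quot_pow[OF qa]
    using pN by (simp add: cong_iff_dvd_diff)
  then have "p \<in> ?S" using kp(2) oa ob by blast
  then show False using kp(3) by blast
qed

end
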